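(* Let $G$ be a finite abelian group of order $N$, and let $e = \exp G$ be the exponent of $G$, that is, the least common multiple of the orders of the elements of $G$. For $1 \leq r \leq N$, define \[D(N, e, r) = \{d_1 d_2 \mid d_1 \in D(N/e),\ d_2 \in D(e),\ d_1 e \geq r\},\] where $D(n)$ denotes the set of positive divisors of $n$. Then for every $1 \le r \le N$, \[\rho_G^-(r) \leq \min_{d \in D(N, e, r)} d \left(2\left\lceil\frac{r}{d}\right\rceil - 1\right).\]
   Context: For a finite abelian group $(G,+)$ of order $N$ and subsets $A, B \subseteq G$, write $A - B = \{a - b \mid a \in A, b \in B\}$. For $1 \le r \le N$ define $\rho^-_G(r) = \min \{|A - A| \mid A \subseteq G, |A| = r\}$. *)

theory Defs
  imports "HOL-Algebra.Algebra"
begin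

definition diff_set :: "('a, 'b) monoid_scheme \<Rightarrow> 'a set \<Rightarrow> 'a set" where
  "diff_set G A = {a \<otimes>\<^bsub>G\<^esub> inv\<^bsub>G\<^esub> b | a b. a \<in> A \<and> b \<in> A}"

definition rho_minus :: "('a, 'b) monoid_scheme \<Rightarrow> nat \<Rightarrow> nat" where
  "rho_minus G r = Min {card (diff_set G A) | A. A \<subseteq> carrier G \<and> card A = r}"

definition group_exponent :: "('a, 'b) monoid_scheme \<Rightarrow> nat" where
  "group_exponent G = Lcm (group.ord G ` carrier G)"

definition pos_divisors :: "nat \<Rightarrow> nat set" where
  "pos_divisors n = {d. 0 < d \<and> d dvd n}"

definition Dset :: "nat \<Rightarrow> nat \<Rightarrow> nat \<Rightarrow> nat set" where
  "Dset N e r = {d1 * d2 | d1 d2. d1 \<in> pos_divisors (N div e) \<and> d2 \<in> pos_divisors e \<and> d1 * e \<ge> r}"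

end

theory Submission
  imports Defs
begin


definition genset :: "('a,'b) monoid_scheme \<Rightarrow> 'a set \<Rightarrow> 'a \<Rightarrow> 'a set" where
  "genset G H z = {h \<otimes>\<^bsub>G\<^esub> z [^]\<^bsub>G\<^esub> (i::int) | h i. h \<in> H}"

lemma genset_memI: "h \<in> H \<Longrightarrow> x = h \<otimes>\<^bsub>G\<^esub> z [^]\<^bsub>G\<^esub> (i::int) \<Longrightarrow> x \<in> genset G H z"
  unfolding genset_def by blast

lemma genset_memE: "x \<in> genset G H z \<Longrightarrow> (\<And>h i. h \<in> H \<Longrightarrow> x = h \<otimes>\<^bsub>G\<^esub> z [^]\<^bsub>G\<^esub> (i::int) \<Longrightarrow> P) \<Longrightarrow> P"
  unfolding genset_def by blast

context comm_group begin

lemma genset_subgroup: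
  assumes H: "subgroup H G" and z: "z \<in> carrier G"
  shows "subgroup (genset G H z) G"
proof (rule subgroupI)
  have Hc: "H \<subseteq> carrier G" using H subgroup.subset by blast
  show "genset G H z \<subseteq> carrier G"
  proof
    fix x assume "x \<in> genset G H z"
    then obtain h i where "h \<in> H" "x = h \<otimes> z [^] (i::int)" by (rule genset_memE)
    then show "x \<in> carrier G" using Hc z by auto
  qed
  have "\<one> \<in> genset G H z"
    by (rule genset_memI[of "\<one>" _ _ _ _ 0]) (auto simp: z subgroup.one_closed[OF H])
  then show "genset G H z \<noteq> {}" by blast
next
  have Hc: "H \<subseteq> carrier G" using H subgroup.subset by blast
  fix a assume "a \<in> genset G H z"
  then obtain h i where a: "h \<in> H" "a = h \<otimes> z [^] (i::int)" by (rule genset_memE)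
  have hc: "h \<in> carrier G" using a Hc by auto
  have "inv a = inv h \<otimes> z [^] (-i)"
    using a hc z by (simp add: inv_mult int_pow_neg)
  moreover have "inv h \<in> H" by (rule subgroup.m_inv_closed[OF H a(1)])
  ultimately show "inv a \<in> genset G H z" by (intro genset_memI)
next
  have Hc: "H \<subseteq> carrier G" using H subgroup.subset by blast
  fix a b assume A: "a \<in> genset G H z" and B: "b \<in> genset G H z"
  obtain h i where a: "h \<in> H" "a = h \<otimes> z [^] (i::int)" using A by (rule genset_memE)
  obtain h' j where b: "h' \<in> H" "b = h' \<otimes> z [^] (j::int)" using B by (rule genset_memE)
  have c: "h \<in> carrier G" "h' \<in> carrier G" using a b Hc by auto
  have "a \<otimes> b = (h \<otimes> h') \<otimes> z [^] (i + j)"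
    using a b c z by (simp add: int_pow_mult m_ac)
  moreover have "h \<otimes> h' \<in> H" by (rule subgroup.m_closed[OF H a(1) b(1)])
  ultimately show "a \<otimes> b \<in> genset G H z" by (intro genset_memI)
qed

lemma genset_sup: "subgroup H G \<Longrightarrow> z \<in> carrier G \<Longrightarrow> H \<subseteq> genset G H z"
proof
  fix h assume "subgroup H G" "z \<in> carrier G" "h \<in> H"
  then have "h = h \<otimes> z [^] (0::int)" using subgroup.subset by fastforce
  then show "h \<in> genset G H z" using \<open>h \<in> H\<close> by (intro genset_memI)
qed

lemma genset_gen: "subgroup H G \<Longrightarrow> z \<in> carrier G \<Longrightarrow> z [^] (i::int) \<in> genset G H z"
  by (rule genset_memI[of "\<one>"]) (auto simp: subgroup.one_closed)

lemma pow_inj_box: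
  assumes H: "subgroup H G" and z: "z \<in> carrier G"
    and nz: "\<And>i::int. 0 < i \<Longrightarrow> i < n \<Longrightarrow> z [^] i \<notin> H"
  shows "inj_on (\<lambda>(h,i). h \<otimes> z [^] (i::int)) (H \<times> {0..<n})"
proof -
  have Hc: "H \<subseteq> carrier G" using H subgroup.subset by blast
  have key: "h1 = h2 \<and> i1 = i2" if "h1 \<in> H" "h2 \<in> H" "i1 \<in> {0..<n}" "i2 \<in> {0..<n}" "i1 \<le> i2"
      "h1 \<otimes> z [^] i1 = h2 \<otimes> z [^] i2" for h1 h2 i1 i2
  proof -
    have c: "h1 \<in> carrier G" "h2 \<in> carrier G" using that Hc by auto
    have "z [^] i2 = z [^] (i2 - i1) \<otimes> z [^] i1" using z by (simp flip: int_pow_mult)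
    then have "h1 \<otimes> z [^] i1 = (h2 \<otimes> z [^] (i2 - i1)) \<otimes> z [^] i1"
      using that c z by (simp add: m_assoc)
    then have e: "h1 = h2 \<otimes> z [^] (i2 - i1)" using c z by (metis int_pow_closed m_closed r_cancel)
    then have "z [^] (i2 - i1) = inv h2 \<otimes> h1" using c z
      by (simp add: m_assoc[symmetric])
    also have "\<dots> \<in> H" by (rule subgroup.m_closed[OF H subgroup.m_inv_closed[OF H that(2)] that(1)])
    finally have mem: "z [^] (i2 - i1) \<in> H" .
    have "i2 - i1 < n" using that by auto
    then have "\<not> (0 < i2 - i1)" using nz[of "i2 - i1"] mem by blast
    then have "i1 = i2" using that by linarith
    then show ?thesis using e c z by simp
  qed
  show ?thesis
  proof (rule inj_onI)
    fix x y assume x: "x \<in> H \<times> {0..<n}" and y: "y \<in> H \<times> {0..<n}"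
      and e: "(\<lambda>(h,i). h \<otimes> z [^] (i::int)) x = (\<lambda>(h,i). h \<otimes> z [^] (i::int)) y"
    obtain h1 i1 where xx: "x = (h1,i1)" by fastforce
    obtain h2 i2 where yy: "y = (h2,i2)" by fastforce
    show "x = y"
    proof (cases "i1 \<le> i2")
      case True
      then show ?thesis using key[of h1 h2 i1 i2] x y e xx yy by auto
    next
      case False
      then show ?thesis using key[of h2 h1 i2 i1] x y e xx yy by auto
    qed
  qed
qed

lemma genset_eq_box:
  assumes H: "subgroup H G" and z: "z \<in> carrier G" and n: "n > 0"
    and zn: "z [^] (int n) \<in> H"
  shows "genset G H z = (\<lambda>(h,i). h \<otimes> z [^] (i::int)) ` (H \<times> {0..<int n})"
proof
  have Hc: "H \<subseteq> carrier G" using H subgroup.subset by blast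
  show "genset G H z \<subseteq> (\<lambda>(h,i). h \<otimes> z [^] (i::int)) ` (H \<times> {0..<int n})"
  proof
    fix x assume "x \<in> genset G H z"
    then obtain h i where a: "h \<in> H" "x = h \<otimes> z [^] (i::int)" by (rule genset_memE)
    have hc: "h \<in> carrier G" using a Hc by auto
    define q where "q = i div int n"
    define r where "r = i mod int n"
    have i: "i = int n * q + r" unfolding q_def r_def by simp
    have r: "r \<in> {0..<int n}" unfolding r_def using n by simp
    have "z [^] i = (z [^] int n) [^] q \<otimes> z [^] r"
      using z i by (simp add: int_pow_mult int_pow_pow)
    then have "x = (h \<otimes> (z [^] int n) [^] q) \<otimes> z [^] r"
      using a hc z by (simp add: m_assoc)
    moreover have "h \<otimes> (z [^] int n) [^] q \<in> H"
      by (rule subgroup.m_closed[OF H a(1) subgroup_int_pow_closed[OF H zn]])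
    ultimately show "x \<in> (\<lambda>(h,i). h \<otimes> z [^] (i::int)) ` (H \<times> {0..<int n})"
      using r by force
  qed
  show "(\<lambda>(h,i). h \<otimes> z [^] (i::int)) ` (H \<times> {0..<int n}) \<subseteq> genset G H z"
    by (auto intro: genset_memI)
qed

lemma genset_card:
  assumes H: "subgroup H G" and z: "z \<in> carrier G" and n: "n > 0"
    and zn: "z [^] (int n) \<in> H"
    and nz: "\<And>i::int. 0 < i \<Longrightarrow> i < int n \<Longrightarrow> z [^] i \<notin> H"
  shows "card (genset G H z) = card H * n"
proof -
  have "card (genset G H z) = card (H \<times> {0..<int n})"
    unfolding genset_eq_box[OF H z n zn]
    by (rule card_image[OF pow_inj_box[OF H z nz]])
  then show ?thesis by (simp add: card_cartesian_product)
qed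

end



context comm_group begin

lemma ord_mult_coprime:
  assumes x: "x \<in> carrier G" and y: "y \<in> carrier G" and c: "coprime (ord x) (ord y)"
  shows "ord (x \<otimes> y) = ord x * ord y"
proof (rule dvd_antisym)
  show "ord (x \<otimes> y) dvd ord x * ord y" by (rule abelian_ord_mul_divides[OF x y])
  define k where "k = ord (x \<otimes> y)"
  have "(x \<otimes> y) [^] k = \<one>" unfolding k_def using x y by simp
  then have e1: "x [^] k \<otimes> y [^] k = \<one>" using x y by (simp add: pow_mult_distrib m_comm)
  have yk: "(y [^] k) [^] ord y = \<one>" using y by (metis nat_pow_pow mult.commute pow_ord_eq_1 nat_pow_one)
  have xk: "(x [^] k) [^] ord x = \<one>" using x by (metis nat_pow_pow mult.commute pow_ord_eq_1 nat_pow_one)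
  have "x [^] (k * ord y) = (x [^] k \<otimes> y [^] k) [^] ord y"
    using x y yk by (simp add: pow_mult_distrib m_comm nat_pow_pow)
  also have "\<dots> = \<one>" using e1 by simp
  finally have "ord x dvd k * ord y" using x by (simp add: pow_eq_id)
  then have dx: "ord x dvd k" using c by (simp add: coprime_dvd_mult_left_iff)
  have "y [^] (k * ord x) = (x [^] k \<otimes> y [^] k) [^] ord x"
    using x y xk by (simp add: pow_mult_distrib m_comm nat_pow_pow)
  also have "\<dots> = \<one>" using e1 by simp
  finally have "ord y dvd k * ord x" using y by (simp add: pow_eq_id)
  then have dy: "ord y dvd k" using c by (simp add: coprime_dvd_mult_left_iff coprime_commute)
  show "ord x * ord y dvd ord (x \<otimes> y)" unfolding k_def[symmetric]
    using dx dy c by (simp add: divides_mult)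
qed

lemma max_ord_dvd:
  assumes fin: "finite (carrier G)"
  shows "\<exists>g\<in>carrier G. \<forall>x\<in>carrier G. ord x dvd ord g"
proof -
  have ne: "ord ` carrier G \<noteq> {}" by auto
  have fi: "finite (ord ` carrier G)" using fin by simp
  obtain g where g: "g \<in> carrier G" "ord g = Max (ord ` carrier G)"
    using Max_in[OF fi ne] by auto
  have mx: "ord x \<le> ord g" if "x \<in> carrier G" for x
    using g(2) Max_ge[OF fi] that by auto
  have "ord x dvd ord g" if x: "x \<in> carrier G" for x
  proof (rule ccontr)
    assume nd: "\<not> ord x dvd ord g"
    define n where "n = ord x"
    define m where "m = ord g"
    have n0: "n \<noteq> 0" unfolding n_def using ord_ge_1[OF fin x] by simp
    have m0: "m \<noteq> 0" unfolding m_def using ord_ge_1[OF fin g(1)] by simp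
    have "\<exists>p. Factorial_Ring.prime p \<and> multiplicity p n > multiplicity p m"
    proof (rule ccontr)
      assume "\<not> ?thesis"
      then have "\<And>p. Factorial_Ring.prime p \<Longrightarrow> multiplicity p n \<le> multiplicity p m"
        by (simp add: not_less)
      then have "n dvd m" by (rule multiplicity_le_imp_dvd[OF n0])
      then show False using nd unfolding n_def m_def by simp
    qed
    then obtain p where p: "Factorial_Ring.prime p" "multiplicity p n > multiplicity p m"
      by blast
    define a where "a = multiplicity p n"
    define b where "b = multiplicity p m"
    have pa: "p ^ a dvd n" unfolding a_def by (rule multiplicity_dvd)
    have pb: "p ^ b dvd m" unfolding b_def by (rule multiplicity_dvd)
    have ndp: "\<not> p dvd (m div p ^ b)" unfolding b_def by (rule multiplicity_decompose) (use m0 p(1) in \<open>auto simp: prime_elem_not_unit\<close>)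
    have p0: "p > 0" using p(1) prime_gt_0_nat by blast
    obtain c where nc: "n = p ^ a * c" using pa by (elim dvdE)
    obtain d where md: "m = p ^ b * d" using pb by (elim dvdE)
    have pa0: "p ^ a > 0" "p ^ b > 0" using p0 by auto
    have c0: "c > 0" using nc n0 by (cases c) auto
    have d0: "d > 0" using md m0 by (cases d) auto
    have ndc: "n div p ^ a = c" using nc pa0 by simp
    have mdd: "m div p ^ b = d" using md pa0 by simp
    define x' where "x' = x [^] c"
    define g' where "g' = g [^] (p ^ b)"
    have ox: "ord x' = p ^ a"
    proof -
      have "ord x' = n div c" unfolding x'_def n_def
        by (rule ord_pow[OF x]) (use nc c0 n_def in auto)
      also have "\<dots> = p ^ a" using nc c0 by simp
      finally show ?thesis .
    qed
    have og: "ord g' = m div p ^ b" unfolding g'_def m_def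
      by (rule ord_pow[OF g(1)]) (use pb p0 m_def in auto)
    have cop: "coprime (ord x') (ord g')" unfolding ox og
      using ndp p(1) by (simp add: coprime_power_left_iff prime_imp_coprime)
    have xc: "x' \<in> carrier G" "g' \<in> carrier G" unfolding x'_def g'_def using x g(1) by simp_all
    have "ord (x' \<otimes> g') = ord x' * ord g'" by (rule ord_mult_coprime[OF xc cop])
    also have "\<dots> = p ^ a * (m div p ^ b)" by (simp add: ox og)
    also have "\<dots> > p ^ b * (m div p ^ b)"
    proof -
      have "m div p ^ b > 0" using mdd d0 by simp
      moreover have "p ^ b < p ^ a" using p unfolding a_def b_def
        using prime_gt_1_nat[OF p(1)] by (simp add: power_strict_increasing)
      ultimately show ?thesis by simp
    qed
    also have "p ^ b * (m div p ^ b) = m" using pb by simp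
    finally have "ord (x' \<otimes> g') > ord g" unfolding m_def .
    moreover have "x' \<otimes> g' \<in> carrier G" using xc by simp
    ultimately show False using mx[of "x' \<otimes> g'"] by linarith
  qed
  then show ?thesis using g(1) by blast
qed

end



lemma first_switch:
  assumes "\<not> f (0::nat)" "f n"
  shows "\<exists>c. \<not> f c \<and> f (Suc c)"
  using assms by (induction n) auto

context comm_group begin

lemma bezout_mem:
  assumes S: "subgroup S G" and z: "z \<in> carrier G" and p: "Factorial_Ring.prime (p::nat)"
    and zp: "z [^] (int p) \<in> S" and zi: "z [^] (i::int) \<in> S" and nd: "\<not> int p dvd i"
  shows "z \<in> S"
proof -
  have "coprime (int p) i" using p nd
    by (simp add: prime_imp_coprime)
  then have "gcd i (int p) = 1" by (simp add: coprime_iff_gcd_eq_1 gcd.commute)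
  then obtain u v where uv: "u * i + v * int p = 1" using bezout_int[of i "int p"] by auto
  have "z = z [^] (u * i + v * int p)" using uv z by simp
  also have "\<dots> = z [^] (i * u) \<otimes> z [^] (int p * v)"
    using z by (simp add: int_pow_mult mult.commute)
  also have "\<dots> = (z [^] i) [^] u \<otimes> (z [^] (int p)) [^] v"
    using z by (simp only: int_pow_pow)
  also have "\<dots> \<in> S"
    by (rule subgroup.m_closed[OF S subgroup_int_pow_closed[OF S zi] subgroup_int_pow_closed[OF S zp]])
  finally show ?thesis .
qed

lemma subgroup_card_dvd:
  assumes P: "subgroup P G" and S: "subgroup S G" and PS: "P \<subseteq> S"
  shows "card P dvd card S"
proof -
  interpret GS: group "G\<lparr>carrier := S\<rparr>" by (rule subgroup_imp_group[OF S])
  have "card (rcosets\<^bsub>G\<lparr>carrier := S\<rparr>\<^esub> P) * card P = order (G\<lparr>carrier := S\<rparr>)"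
    by (rule GS.lagrange[OF subgroup_incl[OF P S PS]])
  moreover have "order (G\<lparr>carrier := S\<rparr>) = card S" by (simp add: order_def)
  ultimately have "card S = card P * card (rcosets\<^bsub>G\<lparr>carrier := S\<rparr>\<^esub> P)" by (simp add: mult.commute)
  then show ?thesis by (rule dvdI)
qed

end



context comm_group begin

lemma step_lemma:
  assumes fin: "finite (carrier G)" and g: "g \<in> carrier G"
    and maxg: "\<And>x. x \<in> carrier G \<Longrightarrow> ord x dvd ord g"
    and K: "subgroup K G" and tK: "\<And>t::int. g [^] t \<in> K \<Longrightarrow> g [^] t = \<one>"
    and p: "Factorial_Ring.prime (p::nat)" and dv: "p * card K * ord g dvd order G"
  shows "\<exists>K'. subgroup K' G \<and> card K' = p * card K \<and> (\<forall>t::int. g [^] t \<in> K' \<longrightarrow> g [^] t = \<one>)"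
proof -
  define e where "e = ord g"
  have e0: "e > 0" unfolding e_def using ord_ge_1[OF fin g] by simp
  have Kc: "K \<subseteq> carrier G" using K subgroup.subset by blast
  have finK: "finite K" using Kc fin finite_subset by blast
  define S where "S = genset G K g"
  have S: "subgroup S G" unfolding S_def by (rule genset_subgroup[OF K g])
  have KS: "K \<subseteq> S" unfolding S_def by (rule genset_sup[OF K g])
  have gS: "g [^] (t::int) \<in> S" for t unfolding S_def by (rule genset_gen[OF K g])
  have ge: "g [^] (int e) = \<one>" unfolding e_def using g by (simp add: int_pow_int)
  have cardS: "card S = card K * e" unfolding S_def
  proof (rule genset_card[OF K g e0])
    show "g [^] int e \<in> K" using ge subgroup.one_closed[OF K] by simp
    fix i :: int assume i: "0 < i" "i < int e"
    show "g [^] i \<notin> K"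
    proof
      assume "g [^] i \<in> K"
      then have "g [^] i = \<one>" by (rule tK)
      then have "int e dvd i" unfolding e_def using g by (simp add: int_pow_eq_id)
      then show False using i zdvd_imp_le by fastforce
    qed
  qed
  define N where "N = order G"
  have N0: "N > 0" unfolding N_def using fin order_gt_0_iff_finite by blast
  define a where "a = multiplicity p N"
  obtain P where P: "subgroup P G" "card P = p ^ a"
    using sylow_thm[of p G a "N div p ^ a"] p fin is_group multiplicity_dvd[of p N]
    unfolding a_def N_def by auto
  have nPS: "\<not> P \<subseteq> S"
  proof
    assume "P \<subseteq> S"
    then have "p ^ a dvd card K * e" using subgroup_card_dvd[OF P(1) S] P(2) cardS by simp
    then have "p ^ Suc a dvd p * card K * e" by (simp add: mult.assoc)
    then have "p ^ Suc a dvd N" using dv unfolding N_def e_def using dvd_trans by blast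
    then have "Suc a \<le> multiplicity p N"
      using power_dvd_iff_le_multiplicity[of N p "Suc a"] N0 p prime_gt_1_nat[OF p] by (simp add: prime_elem_not_unit del: power_Suc)
    then show False unfolding a_def by simp
  qed
  then obtain y where y: "y \<in> P" "y \<notin> S" by blast
  have yc: "y \<in> carrier G" using y(1) P(1) subgroup.subset by blast
  have ypa: "y [^] (p ^ a) = \<one>"
  proof -
    interpret GP: group "G\<lparr>carrier := P\<rparr>" by (rule subgroup_imp_group[OF P(1)])
    have "y [^]\<^bsub>G\<lparr>carrier := P\<rparr>\<^esub> order (G\<lparr>carrier := P\<rparr>) = \<one>\<^bsub>G\<lparr>carrier := P\<rparr>\<^esub>"
      using GP.pow_order_eq_1 y(1) by simp
    then show ?thesis using P(2) by (simp add: order_def flip: nat_pow_consistent)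
  qed
  obtain c where c: "y [^] (p ^ c) \<notin> S" "y [^] (p ^ Suc c) \<in> S"
    using first_switch[of "\<lambda>c. y [^] (p ^ c) \<in> S" a] y(2) ypa subgroup.one_closed[OF S] yc
    by auto
  have pe: "p dvd e"
  proof -
    have "ord y dvd p ^ a" using ypa yc by (simp add: pow_eq_id)
    then obtain i where i: "i \<le> a" "ord y = p ^ i" using divides_primepow_nat[OF p] by blast
    have "y \<noteq> \<one>" using y(2) subgroup.one_closed[OF S] by blast
    then have "ord y \<noteq> 1" using ord_eq_1 yc by simp
    then have "i \<noteq> 0" using i by auto
    then have "p dvd ord y" using i by simp
    then show ?thesis unfolding e_def using maxg[OF yc] dvd_trans by blast
  qed
  then obtain e' where e': "e = p * e'" by (elim dvdE)
  define x where "x = y [^] (p ^ c)"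
  have xc: "x \<in> carrier G" unfolding x_def using yc by simp
  have xS: "x \<notin> S" unfolding x_def using c(1) .
  have xpS: "x [^] (int p) \<in> S" unfolding x_def using c(2) yc
    by (simp add: int_pow_int nat_pow_pow mult.commute)
  obtain k j where kj: "k \<in> K" "x [^] (int p) = k \<otimes> g [^] (j::int)"
    using xpS unfolding S_def by (rule genset_memE)
  have kc: "k \<in> carrier G" using kj(1) Kc by auto
  have xe: "x [^] (int e) = \<one>"
    using maxg[OF xc] xc unfolding e_def by (simp add: int_pow_eq_id)
  have "\<one> = (x [^] (int p)) [^] (int e')" using xe e' xc by (simp add: int_pow_pow)
  also have "\<dots> = k [^] (int e') \<otimes> g [^] (j * int e')"
    using kj(2) kc g by (simp add: int_pow_distrib int_pow_pow)
  finally have "g [^] (j * int e') \<otimes> k [^] (int e') = \<one>"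
    using kc g by (simp add: m_comm)
  then have "inv (k [^] (int e')) = g [^] (j * int e')"
    by (rule inv_equality) (use kc g in simp_all)
  then have "g [^] (j * int e') = inv (k [^] (int e'))" by simp
  also have "\<dots> \<in> K" by (rule subgroup.m_inv_closed[OF K subgroup_int_pow_closed[OF K kj(1)]])
  finally have "g [^] (j * int e') = \<one>" by (rule tK)
  then have "int e dvd j * int e'" unfolding e_def using g by (simp add: int_pow_eq_id)
  then have "int p * int e' dvd j * int e'" using e' by simp
  then have "int p dvd j" using e0 e' by simp
  then obtain q where q: "j = int p * q" by (elim dvdE)
  define x' where "x' = x \<otimes> g [^] (- q)"
  have x'c: "x' \<in> carrier G" unfolding x'_def using xc g by simp
  have x'p: "x' [^] (int p) = k"
  proof -
    have "x' [^] (int p) = x [^] (int p) \<otimes> g [^] (- q * int p)"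
      unfolding x'_def using xc g by (simp add: int_pow_distrib int_pow_pow)
    also have "\<dots> = k \<otimes> (g [^] j \<otimes> g [^] (- j))" using kj(2) kc g q by (simp add: m_assoc mult.commute)
    also have "\<dots> = k" using g kc by (simp add: int_pow_neg)
    finally show ?thesis .
  qed
  have x'S: "x' \<notin> S"
  proof
    assume "x' \<in> S"
    then have "x' \<otimes> g [^] q \<in> S" using subgroup.m_closed[OF S _ gS] by blast
    moreover have "x' \<otimes> g [^] q = x" unfolding x'_def using xc g
      by (simp add: m_assoc flip: int_pow_mult)
    ultimately show False using xS by simp
  qed
  have notin: "x' [^] (i::int) \<in> S \<Longrightarrow> int p dvd i" for i
    using bezout_mem[OF S x'c p _ _] x'p KS kj(1) x'S by blast
  define K' where "K' = genset G K x'"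
  have K': "subgroup K' G" unfolding K'_def by (rule genset_subgroup[OF K x'c])
  have p0: "p > 0" using p prime_gt_0_nat by blast
  have cardK': "card K' = card K * p" unfolding K'_def
  proof (rule genset_card[OF K x'c p0])
    show "x' [^] int p \<in> K" using x'p kj(1) by simp
    fix i :: int assume i: "0 < i" "i < int p"
    show "x' [^] i \<notin> K"
    proof
      assume "x' [^] i \<in> K"
      then have "int p dvd i" using notin KS by blast
      then show False using i zdvd_imp_le by fastforce
    qed
  qed
  have tK': "g [^] t = \<one>" if "g [^] (t::int) \<in> K'" for t
  proof -
    obtain h i where hi: "h \<in> K" "g [^] t = h \<otimes> x' [^] (i::int)"
      using \<open>g [^] t \<in> K'\<close> unfolding K'_def by (rule genset_memE)
    have hc: "h \<in> carrier G" using hi(1) Kc by auto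
    have "x' [^] i = inv h \<otimes> g [^] t" using hi(2) hc x'c g
      by (simp add: m_assoc[symmetric])
    also have "\<dots> \<in> S"
      by (rule subgroup.m_closed[OF S subgroup.m_inv_closed[OF S] gS]) (use hi(1) KS in auto)
    finally have "int p dvd i" by (rule notin)
    then obtain s where s: "i = int p * s" by (elim dvdE)
    have "x' [^] i = k [^] s" using s x'c by (simp flip: x'p add: int_pow_pow)
    then have "g [^] t = h \<otimes> k [^] s" using hi(2) by simp
    also have "\<dots> \<in> K"
      by (rule subgroup.m_closed[OF K hi(1) subgroup_int_pow_closed[OF K kj(1)]])
    finally show ?thesis by (rule tK)
  qed
  show ?thesis using K' cardK' tK' by (intro exI[of _ K']) (simp add: mult.commute)
qed

end



context comm_group begin

lemma exists_K:
  assumes fin: "finite (carrier G)" and g: "g \<in> carrier G"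
    and maxg: "\<And>x. x \<in> carrier G \<Longrightarrow> ord x dvd ord g"
  shows "d1 * ord g dvd order G \<Longrightarrow>
    \<exists>K. subgroup K G \<and> card K = d1 \<and> (\<forall>t::int. g [^] t \<in> K \<longrightarrow> g [^] t = \<one>)"
proof (induction d1 rule: less_induct)
  case (less d1)
  have N0: "order G > 0" using fin order_gt_0_iff_finite by blast
  show ?case
  proof (cases "d1 = 1")
    case True
    have "subgroup {\<one>} G" by (rule triv_subgroup)
    then show ?thesis using True by (intro exI[of _ "{\<one>}"]) auto
  next
    case False
    have "d1 \<noteq> 0" using less.prems N0 by (cases "d1 = 0") auto
    obtain p where p: "Factorial_Ring.prime p" "p dvd d1" using prime_factor_nat[OF False] by blast
    obtain d' where d': "d1 = p * d'" using p(2) by (elim dvdE)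
    have p1: "p > 1" using prime_gt_1_nat[OF p(1)] .
    have "d' < d1" using d' p1 \<open>d1 \<noteq> 0\<close> by simp
    moreover have "p * (d' * ord g) dvd order G" using less.prems d' by (simp add: mult.assoc)
    then have "d' * ord g dvd order G" by (rule dvd_mult_right)
    ultimately have "\<exists>K. subgroup K G \<and> card K = d' \<and> (\<forall>t::int. g [^] t \<in> K \<longrightarrow> g [^] t = \<one>)"
      by (rule less.IH)
    then obtain K where K: "subgroup K G" "card K = d'" "\<forall>t::int. g [^] t \<in> K \<longrightarrow> g [^] t = \<one>"
      by blast
    have dv: "p * card K * ord g dvd order G" using less.prems d' K(2) by simp
    have tK: "\<And>t::int. g [^] t \<in> K \<Longrightarrow> g [^] t = \<one>" using K(3) by simp
    obtain K' where "subgroup K' G" "card K' = p * card K" "\<forall>t::int. g [^] t \<in> K' \<longrightarrow> g [^] t = \<one>"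
      using step_lemma[where g=g and K=K and p=p, OF fin g maxg K(1) tK p(1) dv] by blast
    then show ?thesis using K(2) d' by (intro exI[of _ K']) simp
  qed
qed

end



lemma enc_inj:
  assumes m: "(m::int) > 0"
  shows "inj_on (\<lambda>(i,j). i + m * j) ({0..<m} \<times> UNIV)"
proof (rule inj_onI)
  fix x y assume x: "x \<in> {0..<m} \<times> UNIV" and y: "y \<in> {0..<m} \<times> UNIV"
    and e: "(\<lambda>(i,j). i + m * j) x = (\<lambda>(i,j). i + m * j) y"
  obtain i1 j1 where xx: "x = (i1, j1)" by fastforce
  obtain i2 j2 where yy: "y = (i2, j2)" by fastforce
  have i: "0 \<le> i1" "i1 < m" "0 \<le> i2" "i2 < m" using x y xx yy by auto
  have e': "i1 + m * j1 = i2 + m * j2" using e xx yy by simp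
  have "(i1 + m * j1) mod m = i1" using i by simp
  moreover have "(i2 + m * j2) mod m = i2" using i by simp
  ultimately have ii: "i1 = i2" using e' by simp
  then have "m * j1 = m * j2" using e' by simp
  then have "j1 = j2" using m by simp
  then show "x = y" using ii xx yy by simp
qed

context comm_group begin

lemma construct:
  assumes fin: "finite (carrier G)" and g: "g \<in> carrier G"
    and K: "subgroup K G" and tK: "\<And>t::int. g [^] t \<in> K \<Longrightarrow> g [^] t = \<one>"
    and d2: "d2 > 0" and m: "ord g = m * d2" and kk: "1 \<le> kk" "kk \<le> m"
    and r: "r \<le> card K * d2 * kk"
  shows "\<exists>A. A \<subseteq> carrier G \<and> card A = r \<and> card (diff_set G A) \<le> card K * d2 * (2 * kk - 1)"
proof -
  define e where "e = ord g"
  have e0: "e > 0" unfolding e_def using ord_ge_1[OF fin g] by simp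
  have m0: "m > 0" using kk by simp
  have Kc: "K \<subseteq> carrier G" using K subgroup.subset by blast
  have finK: "finite K" using Kc fin finite_subset by blast
  define enc :: "int \<times> int \<Rightarrow> int" where "enc = (\<lambda>(i,j). i + int m * j)"
  define f where "f = (\<lambda>(h,t). h \<otimes> g [^] (t::int))"
  define I where "I = enc ` ({0..<int kk} \<times> {0..<int d2})"
  define T where "T = enc ` ({-(int kk - 1)..int kk - 1} \<times> {0..<int d2})"
  have encinj: "inj_on enc ({0..<int kk} \<times> {0..<int d2})"
    unfolding enc_def
    by (rule inj_on_subset[OF enc_inj]) (use kk m0 in auto)
  have cardI: "card I = kk * d2" unfolding I_def
    using card_image[OF encinj] by (simp add: card_cartesian_product)
  have Isub: "I \<subseteq> {0..<int e}"
  proof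
    fix t assume "t \<in> I"
    then obtain i j where ij: "0 \<le> i" "i < int kk" "0 \<le> j" "j < int d2" "t = i + int m * j"
      unfolding I_def enc_def by auto
    have "int m * j \<le> int m * (int d2 - 1)" using ij by (intro mult_left_mono) auto
    moreover have "int e = int m * int d2" unfolding e_def m by simp
    ultimately show "t \<in> {0..<int e}" using ij kk by (auto simp: algebra_simps)
  qed
  have nz: "\<And>i::int. 0 < i \<Longrightarrow> i < int e \<Longrightarrow> g [^] i \<notin> K"
  proof
    fix i :: int assume i: "0 < i" "i < int e" "g [^] i \<in> K"
    then have "g [^] i = \<one>" using tK by blast
    then have "int e dvd i" unfolding e_def using g by (simp add: int_pow_eq_id)
    then show False using i zdvd_imp_le by fastforce
  qed
  have finj: "inj_on f (K \<times> I)" unfolding f_def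
    by (rule inj_on_subset[OF pow_inj_box[OF K g nz]]) (use Isub in auto)
  define A' where "A' = f ` (K \<times> I)"
  have cardA': "card A' = card K * (kk * d2)" unfolding A'_def
    using card_image[OF finj] cardI by (simp add: card_cartesian_product)
  have A'c: "A' \<subseteq> carrier G" unfolding A'_def f_def using Kc g by auto
  have "r \<le> card A'" using r cardA' by (simp add: mult_ac)
  then obtain A where A: "A \<subseteq> A'" "card A = r" by (meson obtain_subset_with_card_n)
  have ge: "g [^] (int e) = \<one>" unfolding e_def using g by (simp add: int_pow_int)
  have dsub: "diff_set G A \<subseteq> f ` (K \<times> T)"
  proof
    fix x assume "x \<in> diff_set G A"
    then obtain a b where ab: "a \<in> A" "b \<in> A" "x = a \<otimes> inv b" unfolding diff_set_def by blast
    obtain h1 t1 where a: "h1 \<in> K" "t1 \<in> I" "a = h1 \<otimes> g [^] t1"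
      using ab(1) A(1) unfolding A'_def f_def by auto
    obtain h2 t2 where b: "h2 \<in> K" "t2 \<in> I" "b = h2 \<otimes> g [^] t2"
      using ab(2) A(1) unfolding A'_def f_def by auto
    obtain i1 j1 where t1: "0 \<le> i1" "i1 < int kk" "0 \<le> j1" "j1 < int d2" "t1 = i1 + int m * j1"
      using a(2) unfolding I_def enc_def by auto
    obtain i2 j2 where t2: "0 \<le> i2" "i2 < int kk" "0 \<le> j2" "j2 < int d2" "t2 = i2 + int m * j2"
      using b(2) unfolding I_def enc_def by auto
    have hc: "h1 \<in> carrier G" "h2 \<in> carrier G" using a(1) b(1) Kc by auto
    have hK: "h1 \<otimes> inv h2 \<in> K"
      by (rule subgroup.m_closed[OF K a(1) subgroup.m_inv_closed[OF K b(1)]])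
    have x: "x = (h1 \<otimes> inv h2) \<otimes> g [^] (t1 - t2)"
      using ab(3) a(3) b(3) hc g by (simp add: inv_mult int_pow_diff m_ac)
    have "\<exists>t'\<in>T. g [^] (t1 - t2) = g [^] t'"
    proof (cases "j2 \<le> j1")
      case True
      have "t1 - t2 = enc (i1 - i2, j1 - j2)" unfolding enc_def using t1 t2 by (simp add: algebra_simps)
      moreover have "(i1 - i2, j1 - j2) \<in> {-(int kk - 1)..int kk - 1} \<times> {0..<int d2}"
        using True t1 t2 by auto
      ultimately show ?thesis unfolding T_def by blast
    next
      case False
      have "t1 - t2 + int e = enc (i1 - i2, j1 - j2 + int d2)" unfolding enc_def e_def m
        using t1 t2 by (simp add: algebra_simps)
      moreover have "(i1 - i2, j1 - j2 + int d2) \<in> {-(int kk - 1)..int kk - 1} \<times> {0..<int d2}"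
        using False t1 t2 by auto
      moreover have "g [^] (t1 - t2 + int e) = g [^] (t1 - t2)"
        using g ge by (simp add: int_pow_mult)
      ultimately show ?thesis unfolding T_def by (metis image_eqI)
    qed
    then obtain t' where "t' \<in> T" "g [^] (t1 - t2) = g [^] t'" by blast
    then show "x \<in> f ` (K \<times> T)" using x hK unfolding f_def by force
  qed
  have finT: "finite T" unfolding T_def by simp
  have cardT: "card T \<le> (2 * kk - 1) * d2"
  proof -
    have "card T \<le> card ({-(int kk - 1)..int kk - 1} \<times> {0..<int d2})"
      unfolding T_def by (rule card_image_le) simp
    also have "\<dots> = (2 * kk - 1) * d2"
    proof -
      have "nat (2 * int kk) = 2 * kk" by (simp add: nat_mult_distrib)
      then show ?thesis using kk by (simp add: card_cartesian_product nat_diff_distrib)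
    qed
    finally show ?thesis .
  qed
  have "card (diff_set G A) \<le> card (f ` (K \<times> T))"
    by (rule card_mono[OF _ dsub]) (use finK finT in simp)
  also have "\<dots> \<le> card (K \<times> T)" by (rule card_image_le) (use finK finT in simp)
  also have "\<dots> = card K * card T" by (simp add: card_cartesian_product)
  also have "\<dots> \<le> card K * ((2 * kk - 1) * d2)" using cardT by simp
  finally have "card (diff_set G A) \<le> card K * d2 * (2 * kk - 1)" by (simp add: mult_ac)
  moreover have "A \<subseteq> carrier G" using A(1) A'c by blast
  ultimately show ?thesis using A(2) by blast
qed

end



lemma finite_pos_divisors: "n > 0 \<Longrightarrow> finite (pos_divisors n)"
  unfolding pos_divisors_def by (rule finite_subset[of _ "{..n}"]) (auto dest: dvd_imp_le)

lemma ceil_facts: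
  assumes r: "1 \<le> r" and d: "d > 0" and rm: "r \<le> d * m"
  defines "kk \<equiv> nat \<lceil>real r / real d\<rceil>"
  shows "1 \<le> kk" "kk \<le> m" "r \<le> d * kk" "int kk = \<lceil>real r / real d\<rceil>"
proof -
  have pos: "real r / real d > 0" using r d by simp
  then have c1: "\<lceil>real r / real d\<rceil> \<ge> 1" by (simp add: one_le_ceiling)  
  show "int kk = \<lceil>real r / real d\<rceil>" unfolding kk_def using c1 by simp
  show "1 \<le> kk" unfolding kk_def using c1 by linarith
  have "real r \<le> real d * real m" using rm by (simp flip: of_nat_mult)
  then have "real r / real d \<le> real m" using d by (simp add: pos_divide_le_eq mult.commute)
  then have "\<lceil>real r / real d\<rceil> \<le> int m" by (simp add: ceiling_le_iff)
  then show "kk \<le> m" unfolding kk_def by linarith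
  have "real r / real d \<le> of_int \<lceil>real r / real d\<rceil>" by (rule le_of_int_ceiling)
  also have "\<dots> = real kk" by (simp flip: \<open>int kk = _\<close>)
  finally have "real r / real d \<le> real kk" .
  then have "real r \<le> real d * real kk" using d by (simp add: pos_divide_le_eq mult.commute)
  then show "r \<le> d * kk" by (simp flip: of_nat_mult)
qed

context comm_group begin
lemma main_in:
  fixes r :: nat
  assumes "True"
    and "finite (carrier G)"
    and "1 \<le> r" and "r \<le> card (carrier G)"
  shows "int (rho_minus G r) \<le>
    Min ((\<lambda>d. int d * (2 * \<lceil>real r / real d\<rceil> - 1))
          ` Dset (card (carrier G)) (group_exponent G) r)"
proof -
  note fin = assms(2)
  define N where "N = card (carrier G)"
  have NG: "N = order G" unfolding N_def order_def by simp
  have N0: "N > 0" unfolding NG using fin order_gt_0_iff_finite by blast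
  obtain g where g: "g \<in> carrier G" and maxg: "\<And>x. x \<in> carrier G \<Longrightarrow> ord x dvd ord g"
    using max_ord_dvd[OF fin] by blast
  define e where "e = group_exponent G"
  have e: "e = ord g"
  proof (rule dvd_antisym)
    show "e dvd ord g" unfolding e_def group_exponent_def
      by (rule Lcm_least) (use maxg in auto)
    show "ord g dvd e" unfolding e_def group_exponent_def
      by (rule dvd_Lcm) (use g in auto)
  qed
  have e0: "e > 0" unfolding e using ord_ge_1[OF fin g] by simp
  have eN: "e dvd N" unfolding e NG by (rule ord_dvd_group_order[OF g])
  have Ne0: "N div e > 0" using eN N0 e0 by (metis dvd_div_eq_0_iff gr0I)
  define F where "F = (\<lambda>d. int d * (2 * \<lceil>real r / real d\<rceil> - 1))"
  define R where "R = {card (diff_set G A) | A. A \<subseteq> carrier G \<and> card A = r}"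
  have finR: "finite R"
  proof -
    have "R \<subseteq> (\<lambda>A. card (diff_set G A)) ` Pow (carrier G)" unfolding R_def by blast
    then show ?thesis using fin finite_subset by blast
  qed
  have bound: "int (rho_minus G r) \<le> F d" if d: "d \<in> Dset N e r" for d
  proof -
    obtain d1 d2 where dd: "d = d1 * d2" "d1 \<in> pos_divisors (N div e)" "d2 \<in> pos_divisors e" "r \<le> d1 * e"
      using d unfolding Dset_def by blast
    have d1: "d1 > 0" "d1 dvd N div e" using dd(2) unfolding pos_divisors_def by auto
    have d2: "d2 > 0" "d2 dvd e" using dd(3) unfolding pos_divisors_def by auto
    have "d1 * e dvd N div e * e" using d1(2) by (rule mult_dvd_mono) simp
    then have d1e: "d1 * ord g dvd order G" using eN unfolding e NG by simp
    obtain K where K: "subgroup K G" "card K = d1" "\<forall>t::int. g [^] t \<in> K \<longrightarrow> g [^] t = \<one>"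
      using exists_K[OF fin g maxg d1e] by blast
    have tK: "\<And>t::int. g [^] t \<in> K \<Longrightarrow> g [^] t = \<one>" using K(3) by simp
    define m where "m = e div d2"
    have em: "ord g = m * d2" unfolding m_def using d2(2) e by simp
    have dpos: "d > 0" using dd(1) d1 d2 by simp
    have rdm: "r \<le> d * m" using dd(4) dd(1) em e by (simp add: mult_ac)
    define kk where "kk = nat \<lceil>real r / real d\<rceil>"
    note cf = ceil_facts[OF assms(3) dpos rdm, folded kk_def]
    have "r \<le> card K * d2 * kk" using cf(3) dd(1) K(2) by (simp add: mult_ac)
    then obtain A where A: "A \<subseteq> carrier G" "card A = r" "card (diff_set G A) \<le> card K * d2 * (2 * kk - 1)"
      using construct[OF fin g K(1) tK d2(1) em cf(1) cf(2)] by blast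
    have "rho_minus G r \<le> card (diff_set G A)"
      unfolding rho_minus_def using A(1,2) finR unfolding R_def by (intro Min_le) auto
    also have "\<dots> \<le> d * (2 * kk - 1)" using A(3) K(2) dd(1) by simp
    finally have "int (rho_minus G r) \<le> int (d * (2 * kk - 1))" by linarith
    also have "\<dots> = F d" unfolding F_def using cf(1) cf(4) by (simp add: of_nat_diff)
    finally show ?thesis .
  qed
  have finD: "finite (Dset N e r)"
  proof -
    have "Dset N e r \<subseteq> (\<lambda>(a,b). a * b) ` (pos_divisors (N div e) \<times> pos_divisors e)"
      unfolding Dset_def by auto
    moreover have "finite (pos_divisors (N div e) \<times> pos_divisors e)"
      using finite_pos_divisors[OF Ne0] finite_pos_divisors[OF e0] by simp
    ultimately show ?thesis using finite_subset by blast
  qed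
  have neD: "Dset N e r \<noteq> {}"
  proof -
    have "N div e * e = N" using eN by simp
    then have "(N div e) * 1 \<in> Dset N e r" unfolding Dset_def pos_divisors_def
      using Ne0 e0 assms(4) N_def by fastforce
    then show ?thesis by blast
  qed
  obtain d0 where d0: "d0 \<in> Dset N e r" "Min (F ` Dset N e r) = F d0"
    using Min_in[OF finite_imageI[OF finD]] neD by auto
  show ?thesis using bound[OF d0(1)] d0(2) unfolding F_def N_def e_def by simp
qed

end

theorem mainTheorem1:
  fixes G :: "('a, 'b) monoid_scheme" and r :: nat
  assumes "comm_group G"
    and "finite (carrier G)"
    and "1 \<le> r" and "r \<le> card (carrier G)"
  shows "int (rho_minus G r) \<le>
    Min ((\<lambda>d. int d * (2 * \<lceil>real r / real d\<rceil> - 1))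
          ` Dset (card (carrier G)) (group_exponent G) r)"
  by (rule comm_group.main_in[OF assms(1) TrueI assms(2-4)])


end
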